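(* Let $\hat\mu$ be a randomized base policy, i.e., a fixed probability distribution on $\mathcal U$ from which, in each slot, the action $\mathbf u$ is drawn independently of the state and of the arrivals; write $\mathbb E^{\hat\mu}$ for expectation over $\mathbf u\sim\hat\mu$. For each $n\in\mathcal N$ and $m\in\mathcal M_n$, let $(\hat\theta_{n,m},\hat V_{n,m})$, with $\hat\theta_{n,m}\in\mathbb R$ and $\hat V_{n,m}:\mathcal Q_{n,m}\to\mathbb R$, satisfy $$\hat\theta_{n,m}+\hat V_{n,m}(Q_{n,m})=\mathbb E^{\hat\mu}[g_{n,m}(Q_{n,m},\mathbf u)]+\sum_{Q'_{n,m}\in\mathcal Q_{n,m}}\mathbb E^{\hat\mu}\big[\Pr[Q'_{n,m}\mid Q_{n,m},\mathbf u]\big]\hat V_{n,m}(Q'_{n,m})\quad\forall Q_{n,m}\in\mathcal Q_{n,m},$$ where $g_{n,m}(Q_{n,m},\mathbf u)=Q_{n,m}+w\,\mathbf 1(u_n=m)p(n,m)$ and $\Pr[Q'_{n,m}\mid Q_{n,m},\mathbf u]$ is the probability that the $(n,m)$-component of the next state equals $Q'_{n,m}$ given current component $Q_{n,m}$ and action $\mathbf u$. Then $\hat\theta=\sum_{n\in\mathcal N}\sum_{m\in\mathcal M_n}\hat\theta_{n,m}$ and $\hat V(\mathbf Q)=\sum_{n\in\mathcal N}\sum_{m\in\mathcal M_n}\hat V_{n,m}(Q_{n,m})$ satisfy $$\hat\theta+\hat V(\mathbf Q)=\mathbb E^{\hat\mu}[g(\mathbf Q,\mathbf u)]+\sum_{\mathbf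 Q'\in\mathcal Q}\mathbb E^{\hat\mu}\big[\Pr[\mathbf Q'\mid\mathbf Q,\mathbf u]\big]\hat V(\mathbf Q')\quad\forall\mathbf Q\in\mathcal Q,$$ i.e., the value function of $\hat\mu$ is additively separable over BS-content pairs.
   Context: Model. Let $N\ge 1$, $\mathcal N=\{0,1,\dots,N\}$ (base station $0$ is the macro base station, MBS) and $\mathcal N^+=\{1,\dots,N\}$ (small base stations, SBSs). Let $\mathcal M=\{1,\dots,M\}$ be the set of contents. For each $n\in\mathcal N$ let $\mathcal M_n\subseteq\mathcal M$ be the set of contents cached at BS $n$, with $\mathcal M_0=\mathcal M$; put $\tilde{\mathcal M}_n=\mathcal M_n\cup\{0\}$ and $\mathcal N_m=\{n\in\mathcal N^+: m\in\mathcal M_n\}$. Powers $p(n,m)\ge 0$ are given for $n\in\mathcal N$, $m\in\mathcal M_n$, and $p(n,0)=0$. A weight $w\ge 0$ is fixed. The feasible action space is $\mathcal U=\{\mathbf u=(u_n)_{n\in\mathcal N}: u_n\in\tilde{\mathcal M}_n\ \forall n,\ u_0\sum_{n\in\mathcal N^+}u_n=0\}$. A state is $\mathbf Q=(Q_{n,m})_{n\in\mathcal N,m\in\mathcal M_n}$ with $Q_{n,m}\in\mathcal Q_{n,m}=\{0,1,\dots,N_{n,m}\}$ for given positive integers $N_{n,m}$; $\mathcal Q=\prod_{n\in\mathcal N}\prod_{m\in\mathcal M_n}\mathcal Q_{n,m}$. Arrivals $A_{n,m}$ ($n\in\mathcal N$, $m\in\mathcal M$) are mutually independent nonnegative-integer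 random variables with fixed distributions, i.i.d. across time slots; $\tilde A_{0,m}=A_{0,m}+\sum_{n\in\mathcal N^+\setminus\mathcal N_m}A_{n,m}$. Given state $\mathbf Q$ and action $\mathbf u$, the next state $\mathbf Q'$ is $Q'_{0,m}=\min\{\mathbf 1(u_0\neq m)Q_{0,m}+\tilde A_{0,m},N_{0,m}\}$ for $m\in\mathcal M_0$ and $Q'_{n,m}=\min\{\mathbf 1(u_0\neq m\text{ and }u_n\neq m)Q_{n,m}+A_{n,m},N_{n,m}\}$ for $n\in\mathcal N^+$, $m\in\mathcal M_n$; $\Pr[\mathbf Q'\mid\mathbf Q,\mathbf u]$ is the induced transition probability. The per-stage cost is $g(\mathbf Q,\mathbf u)=d(\mathbf Q)+w\,p(\mathbf u)$ with $d(\mathbf Q)=\sum_{n\in\mathcal N}\sum_{m\in\mathcal M_n}Q_{n,m}$ and $p(\mathbf u)=\sum_{n\in\mathcal N}p(n,u_n)$. *)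

theory Defs
  imports "HOL-Probability.Probability"
begin

text \<open>Base stations are 0..N (0 = MBS), contents are 1..M, action value 0 = idle.
  Mc n is the cache set of BS n; Nc n m the buffer bound N_{n,m}.\<close>

definition SIdx :: "nat \<Rightarrow> (nat \<Rightarrow> nat set) \<Rightarrow> (nat \<times> nat) set" where
  "SIdx N Mc = {(n, m). n \<le> N \<and> m \<in> Mc n}"

definition actions :: "nat \<Rightarrow> (nat \<Rightarrow> nat set) \<Rightarrow> (nat \<Rightarrow> nat) set" where
  "actions N Mc = {u. (\<forall>n\<le>N. u n \<in> Mc n \<union> {0}) \<and> (\<forall>n>N. u n = 0)
                      \<and> u 0 * (\<Sum>n\<in>{1..N}. u n) = 0}"

definition states :: "nat \<Rightarrow> (nat \<Rightarrow> nat set) \<Rightarrow> (nat \<Rightarrow> nat \<Rightarrow> nat)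
                       \<Rightarrow> (nat \<times> nat \<Rightarrow> nat) set" where
  "states N Mc Nc = {Q. (\<forall>(n, m)\<in>SIdx N Mc. Q (n, m) \<le> Nc n m)
                        \<and> (\<forall>x. x \<notin> SIdx N Mc \<longrightarrow> Q x = 0)}"

definition arrivals :: "nat \<Rightarrow> nat \<Rightarrow> (nat \<Rightarrow> nat \<Rightarrow> nat pmf) \<Rightarrow> (nat \<times> nat \<Rightarrow> nat) pmf" where
  "arrivals N M \<alpha> = Pi_pmf ({0..N} \<times> {1..M}) 0 (\<lambda>(n, m). \<alpha> n m)"

definition Atil0 :: "nat \<Rightarrow> (nat \<Rightarrow> nat set) \<Rightarrow> (nat \<times> nat \<Rightarrow> nat) \<Rightarrow> nat \<Rightarrow> nat" where
  "Atil0 N Mc A m = A (0, m) + (\<Sum>n\<in>{n\<in>{1..N}. m \<notin> Mc n}. A (n, m))"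

definition next_comp :: "nat \<Rightarrow> (nat \<Rightarrow> nat set) \<Rightarrow> (nat \<Rightarrow> nat \<Rightarrow> nat)
     \<Rightarrow> nat \<Rightarrow> nat \<Rightarrow> nat \<Rightarrow> (nat \<Rightarrow> nat) \<Rightarrow> (nat \<times> nat \<Rightarrow> nat) \<Rightarrow> nat" where
  "next_comp N Mc Nc n m q u A =
     (if n = 0 then min ((if u 0 \<noteq> m then q else 0) + Atil0 N Mc A m) (Nc 0 m)
      else min ((if u 0 \<noteq> m \<and> u n \<noteq> m then q else 0) + A (n, m)) (Nc n m))"

definition next_state :: "nat \<Rightarrow> (nat \<Rightarrow> nat set) \<Rightarrow> (nat \<Rightarrow> nat \<Rightarrow> nat)
     \<Rightarrow> (nat \<times> nat \<Rightarrow> nat) \<Rightarrow> (nat \<Rightarrow> nat) \<Rightarrow> (nat \<times> nat \<Rightarrow> nat) \<Rightarrow> (nat \<times> nat \<Rightarrow> nat)" where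
  "next_state N Mc Nc Q u A =
     (\<lambda>(n, m). if (n, m) \<in> SIdx N Mc then next_comp N Mc Nc n m (Q (n, m)) u A else 0)"

text \<open>Full-state transition kernel: Pr[Q' | Q, u] = pmf (trans_pmf ... Q u) Q'.\<close>
definition trans_pmf :: "nat \<Rightarrow> nat \<Rightarrow> (nat \<Rightarrow> nat set) \<Rightarrow> (nat \<Rightarrow> nat \<Rightarrow> nat)
     \<Rightarrow> (nat \<Rightarrow> nat \<Rightarrow> nat pmf) \<Rightarrow> (nat \<times> nat \<Rightarrow> nat) \<Rightarrow> (nat \<Rightarrow> nat) \<Rightarrow> (nat \<times> nat \<Rightarrow> nat) pmf" where
  "trans_pmf N M Mc Nc \<alpha> Q u = map_pmf (next_state N Mc Nc Q u) (arrivals N M \<alpha>)"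

text \<open>Component transition kernel: Pr[Q'_{n,m} | Q_{n,m}, u] = pmf (comp_trans_pmf ... n m q u) q'.\<close>
definition comp_trans_pmf :: "nat \<Rightarrow> nat \<Rightarrow> (nat \<Rightarrow> nat set) \<Rightarrow> (nat \<Rightarrow> nat \<Rightarrow> nat)
     \<Rightarrow> (nat \<Rightarrow> nat \<Rightarrow> nat pmf) \<Rightarrow> nat \<Rightarrow> nat \<Rightarrow> nat \<Rightarrow> (nat \<Rightarrow> nat) \<Rightarrow> nat pmf" where
  "comp_trans_pmf N M Mc Nc \<alpha> n m q u = map_pmf (next_comp N Mc Nc n m q u) (arrivals N M \<alpha>)"

text \<open>Per-stage cost g(Q,u) = d(Q) + w p(u), with p(n,0) = 0 assumed.\<close>
definition cost :: "nat \<Rightarrow> (nat \<Rightarrow> nat set) \<Rightarrow> real \<Rightarrow> (nat \<Rightarrow> nat \<Rightarrow> real)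
     \<Rightarrow> (nat \<times> nat \<Rightarrow> nat) \<Rightarrow> (nat \<Rightarrow> nat) \<Rightarrow> real" where
  "cost N Mc w p Q u = (\<Sum>(n, m)\<in>SIdx N Mc. real (Q (n, m))) + w * (\<Sum>n\<le>N. p n (u n))"

definition comp_cost :: "real \<Rightarrow> (nat \<Rightarrow> nat \<Rightarrow> real) \<Rightarrow> nat \<Rightarrow> nat \<Rightarrow> nat \<Rightarrow> (nat \<Rightarrow> nat) \<Rightarrow> real" where
  "comp_cost w p n m q u = real q + w * (if u n = m then p n m else 0)"

end

theory Submission
  imports Defs
begin

lemma int_bdd:
  assumes "\<And>x. x \<in> set_pmf P \<Longrightarrow> \<bar>f x\<bar> \<le> (B::real)"
  shows "integrable (measure_pmf P) f"
  by (rule measure_pmf.integrable_const_bound[where B=B]) (auto simp: AE_measure_pmf_iff assms)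

lemma int_fin:
  assumes "finite (f ` set_pmf P)"
  shows "integrable (measure_pmf P) (f :: _ \<Rightarrow> real)"
proof (rule int_bdd[where B="\<Sum>y\<in>f ` set_pmf P. \<bar>y\<bar>"])
  fix x assume "x \<in> set_pmf P"
  then show "\<bar>f x\<bar> \<le> (\<Sum>y\<in>f ` set_pmf P. \<bar>y\<bar>)"
    using assms by (intro member_le_sum[where f="\<lambda>y. \<bar>y\<bar>", simplified]) auto
qed

lemma cong_pmf:
  assumes "\<And>x. x \<in> set_pmf P \<Longrightarrow> f x = g x"
  shows "measure_pmf.expectation P f = measure_pmf.expectation P (g :: _ \<Rightarrow> real)"
  by (rule integral_cong_AE) (auto simp: AE_measure_pmf_iff assms)


lemma int_pmf: "integrable (measure_pmf \<mu>) (\<lambda>u. pmf (P u) x)"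
  by (rule int_bdd[where B=1]) (auto simp: pmf_le_1)

lemma int_cc: "integrable (measure_pmf \<mu>) (\<lambda>u. comp_cost w p n m q u)"
proof (rule int_fin)
  have "(\<lambda>u. comp_cost w p n m q u) ` set_pmf \<mu> \<subseteq> {real q, real q + w * p n m}"
    by (auto simp: comp_cost_def)
  then show "finite ((\<lambda>u. comp_cost w p n m q u) ` set_pmf \<mu>)" by (rule finite_subset) auto
qed

lemma fin_SIdx:
  assumes "Mc 0 = {1..M}" "\<forall>n\<in>{1..N}. Mc n \<subseteq> {1..M}"
  shows "finite (SIdx N Mc)"
proof (rule finite_subset[of _ "{..N} \<times> {1..M}"])
  show "SIdx N Mc \<subseteq> {..N} \<times> {1..M}"
  proof (clarsimp simp: SIdx_def)
    fix a b assume "a \<le> N" "b \<in> Mc a"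
    moreover have "a \<le> N \<Longrightarrow> Mc a \<subseteq> {1..M}" using assms by (cases "a = 0") auto
    ultimately show "Suc 0 \<le> b \<and> b \<le> M" by auto
  qed
qed auto

lemma fin_states:
  assumes "finite (SIdx N Mc)"
  shows "finite (states N Mc Nc)"
proof -
  let ?B = "\<Sum>x\<in>SIdx N Mc. (case x of (n, m) \<Rightarrow> Nc n m)"
  have "states N Mc Nc \<subseteq> {f. \<forall>x. (x \<in> SIdx N Mc \<longrightarrow> f x \<in> {0..?B}) \<and> (x \<notin> SIdx N Mc \<longrightarrow> f x = 0)}"
  proof safe
    fix Q x assume Q: "Q \<in> states N Mc Nc" and x: "x \<in> SIdx N Mc"
    obtain n m where xe: "x = (n, m)" by force
    have "Q x \<le> Nc n m" using Q x xe by (auto simp: states_def)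
    also have "\<dots> \<le> ?B"
      using member_le_sum[of x "SIdx N Mc" "\<lambda>x. case x of (n, m) \<Rightarrow> Nc n m"] x xe assms by auto
    finally show "Q x \<in> {0..?B}" by simp
  next
    fix Q x assume "Q \<in> states N Mc Nc" "x \<notin> SIdx N Mc" then show "Q x = 0" by (cases x) (auto simp: states_def)
  qed
  then show ?thesis using finite_set_of_finite_funs[OF assms, of "{0..?B}" 0] finite_subset by blast
qed

lemma next_comp_le: "next_comp N Mc Nc n m q u A \<le> Nc n m"
  by (auto simp: next_comp_def)

lemma next_in_states: "next_state N Mc Nc Q u A \<in> states N Mc Nc"
  by (auto simp: states_def next_state_def next_comp_le)

lemma comp_exp:
  "(\<Sum>q'\<in>{0..Nc n m}. pmf (comp_trans_pmf N M Mc Nc \<alpha> n m q u) q' * Vc n m q')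
   = measure_pmf.expectation (arrivals N M \<alpha>) (\<lambda>A. Vc n m (next_comp N Mc Nc n m q u A))"
proof -
  have "measure_pmf.expectation (comp_trans_pmf N M Mc Nc \<alpha> n m q u) (Vc n m)
     = (\<Sum>q'\<in>{0..Nc n m}. Vc n m q' * pmf (comp_trans_pmf N M Mc Nc \<alpha> n m q u) q')"
    by (rule integral_measure_pmf_real) (auto simp: comp_trans_pmf_def next_comp_le)
  then show ?thesis by (simp add: comp_trans_pmf_def mult.commute)
qed

lemma trans_sep:
  assumes fin: "finite (SIdx N Mc)"
  shows "(\<Sum>Q'\<in>states N Mc Nc. pmf (trans_pmf N M Mc Nc \<alpha> Q u) Q' * (\<Sum>(n, m)\<in>SIdx N Mc. Vc n m (Q' (n, m))))
     = (\<Sum>(n, m)\<in>SIdx N Mc. \<Sum>q'\<in>{0..Nc n m}. pmf (comp_trans_pmf N M Mc Nc \<alpha> n m (Q (n, m)) u) q' * Vc n m q')"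
proof -
  let ?F = "\<lambda>Q'. \<Sum>(n, m)\<in>SIdx N Mc. Vc n m (Q' (n, m))"
  have "measure_pmf.expectation (trans_pmf N M Mc Nc \<alpha> Q u) ?F
     = (\<Sum>Q'\<in>states N Mc Nc. ?F Q' * pmf (trans_pmf N M Mc Nc \<alpha> Q u) Q')"
    by (rule integral_measure_pmf_real) (auto simp: trans_pmf_def next_in_states fin_states[OF fin])
  also have "\<dots> = (\<Sum>Q'\<in>states N Mc Nc. pmf (trans_pmf N M Mc Nc \<alpha> Q u) Q' * ?F Q')"
    by (simp add: mult.commute)
  finally have 1: "(\<Sum>Q'\<in>states N Mc Nc. pmf (trans_pmf N M Mc Nc \<alpha> Q u) Q' * ?F Q')
      = measure_pmf.expectation (arrivals N M \<alpha>) (\<lambda>A. ?F (next_state N Mc Nc Q u A))"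
    by (simp add: trans_pmf_def)
  define g where "g = (\<lambda>x A. Vc (fst x) (snd x) (next_comp N Mc Nc (fst x) (snd x) (Q x) u A))"
  have 2: "?F (next_state N Mc Nc Q u A) = (\<Sum>x\<in>SIdx N Mc. g x A)" for A
    by (rule sum.cong) (auto simp: next_state_def g_def)
  have int: "integrable (measure_pmf (arrivals N M \<alpha>)) (g x)" for x
  proof -
    have "g x ` set_pmf (arrivals N M \<alpha>) \<subseteq> Vc (fst x) (snd x) ` {0..Nc (fst x) (snd x)}"
      by (auto simp: next_comp_le g_def)
    then show ?thesis
      by (intro int_fin) (rule finite_subset, auto)
  qed
  have 3: "measure_pmf.expectation (arrivals N M \<alpha>) (\<lambda>A. \<Sum>x\<in>SIdx N Mc. g x A)
     = (\<Sum>x\<in>SIdx N Mc. measure_pmf.expectation (arrivals N M \<alpha>) (g x))"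
    by (rule Bochner_Integration.integral_sum[OF int])
  show ?thesis unfolding 1 2 3
    by (rule sum.cong) (auto simp: comp_exp g_def)
qed


lemma cost_sep:
  assumes "Mc 0 = {1..M}" "\<forall>n\<in>{1..N}. Mc n \<subseteq> {1..M}" "\<forall>n\<le>N. p n 0 = 0"
    and u: "u \<in> actions N Mc"
  shows "cost N Mc w p Q u = (\<Sum>(n, m)\<in>SIdx N Mc. comp_cost w p n m (Q (n, m)) u)"
proof -
  have finMc: "finite (Mc n)" if "n \<le> N" for n
  proof (cases "n = 0")
    case False
    then have "Mc n \<subseteq> {1..M}" using assms(2) that by auto
    then show ?thesis by (rule finite_subset) auto
  qed (use assms in auto)
  have S: "SIdx N Mc = Sigma {..N} Mc" by (auto simp: SIdx_def)
  have "(\<Sum>(n, m)\<in>SIdx N Mc. comp_cost w p n m (Q (n, m)) u)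
     = (\<Sum>(n, m)\<in>SIdx N Mc. real (Q (n, m))) + w * (\<Sum>(n, m)\<in>SIdx N Mc. (if u n = m then p n m else 0))"
    by (simp add: comp_cost_def sum.distrib sum_distrib_left case_prod_beta)
  also have "(\<Sum>(n, m)\<in>SIdx N Mc. (if u n = m then p n m else 0)) = (\<Sum>n\<le>N. \<Sum>m\<in>Mc n. (if u n = m then p n m else 0))"
    unfolding S by (rule sum.Sigma[symmetric]) (auto simp: finMc)
  also have "\<dots> = (\<Sum>n\<le>N. p n (u n))"
  proof (rule sum.cong)
    fix n assume n: "n \<in> {..N}"
    have "(\<Sum>m\<in>Mc n. (if u n = m then p n m else 0)) = (if u n \<in> Mc n then p n (u n) else 0)"
      using finMc n by (simp add: sum.delta)
    also have "\<dots> = p n (u n)" using u n assms(3) by (auto simp: actions_def)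
    finally show "(\<Sum>m\<in>Mc n. (if u n = m then p n m else 0)) = p n (u n)" .
  qed simp
  finally show ?thesis by (simp add: cost_def)
qed


theorem lemma4:
  fixes N M :: nat
    and Mc :: "nat \<Rightarrow> nat set"
    and Nc :: "nat \<Rightarrow> nat \<Rightarrow> nat"
    and p :: "nat \<Rightarrow> nat \<Rightarrow> real"
    and w :: real
    and \<alpha> :: "nat \<Rightarrow> nat \<Rightarrow> nat pmf"
    and \<mu> :: "(nat \<Rightarrow> nat) pmf"
    and \<theta>c :: "nat \<Rightarrow> nat \<Rightarrow> real"
    and Vc :: "nat \<Rightarrow> nat \<Rightarrow> nat \<Rightarrow> real"
  assumes "N \<ge> 1"
    and "Mc 0 = {1..M}"
    and "\<forall>n\<in>{1..N}. Mc n \<subseteq> {1..M}"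
    and "\<forall>(n, m)\<in>SIdx N Mc. Nc n m > 0"
    and "\<forall>(n, m)\<in>SIdx N Mc. p n m \<ge> 0"
    and "\<forall>n\<le>N. p n 0 = 0"
    and "w \<ge> 0"
    and "set_pmf \<mu> \<subseteq> actions N Mc"
    and bellman_comp: "\<forall>(n, m)\<in>SIdx N Mc. \<forall>q\<in>{0..Nc n m}.
          \<theta>c n m + Vc n m q =
            measure_pmf.expectation \<mu> (\<lambda>u. comp_cost w p n m q u)
            + (\<Sum>q'\<in>{0..Nc n m}.
                 measure_pmf.expectation \<mu> (\<lambda>u. pmf (comp_trans_pmf N M Mc Nc \<alpha> n m q u) q')
                 * Vc n m q')"
  shows "\<forall>Q\<in>states N Mc Nc.
           (\<Sum>(n, m)\<in>SIdx N Mc. \<theta>c n m) + (\<Sum>(n, m)\<in>SIdx N Mc. Vc n m (Q (n, m))) =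
             measure_pmf.expectation \<mu> (\<lambda>u. cost N Mc w p Q u)
             + (\<Sum>Q'\<in>states N Mc Nc.
                  measure_pmf.expectation \<mu> (\<lambda>u. pmf (trans_pmf N M Mc Nc \<alpha> Q u) Q')
                  * (\<Sum>(n, m)\<in>SIdx N Mc. Vc n m (Q' (n, m))))"
proof
  fix Q assume Q: "Q \<in> states N Mc Nc"
  have fin: "finite (SIdx N Mc)" using fin_SIdx assms(2,3) by blast
  have finS: "finite (states N Mc Nc)" using fin_states[OF fin] .
  define C where "C = (\<lambda>x u. comp_cost w p (fst x) (snd x) (Q x) u
      + (\<Sum>q'\<in>{0..Nc (fst x) (snd x)}. pmf (comp_trans_pmf N M Mc Nc \<alpha> (fst x) (snd x) (Q x) u) q' * Vc (fst x) (snd x) q'))"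
  define F where "F = (\<lambda>Q'. \<Sum>(n, m)\<in>SIdx N Mc. Vc n m (Q' (n, m)))"
  define G where "G = (\<lambda>u. \<Sum>Q'\<in>states N Mc Nc. pmf (trans_pmf N M Mc Nc \<alpha> Q u) Q' * F Q')"
  have intC: "integrable (measure_pmf \<mu>) (C x)" for x
    unfolding C_def by (intro Bochner_Integration.integrable_add int_cc Bochner_Integration.integrable_sum integrable_mult_left int_pmf)
  have intG: "integrable (measure_pmf \<mu>) G"
    unfolding G_def by (intro Bochner_Integration.integrable_sum integrable_mult_left int_pmf)
  have EC: "measure_pmf.expectation \<mu> (C x) = \<theta>c (fst x) (snd x) + Vc (fst x) (snd x) (Q x)"
    if x: "x \<in> SIdx N Mc" for x
  proof -
    obtain n m where xe: "x = (n, m)" by force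
    have "Q x \<le> Nc n m" using Q x xe by (auto simp: states_def)
    then have b: "\<theta>c n m + Vc n m (Q x) =
            measure_pmf.expectation \<mu> (\<lambda>u. comp_cost w p n m (Q x) u)
            + (\<Sum>q'\<in>{0..Nc n m}.
                 measure_pmf.expectation \<mu> (\<lambda>u. pmf (comp_trans_pmf N M Mc Nc \<alpha> n m (Q x) u) q')
                 * Vc n m q')"
      using bellman_comp x xe by auto
    have "measure_pmf.expectation \<mu> (C x) = measure_pmf.expectation \<mu> (\<lambda>u. comp_cost w p n m (Q x) u)
       + measure_pmf.expectation \<mu> (\<lambda>u. \<Sum>q'\<in>{0..Nc n m}. pmf (comp_trans_pmf N M Mc Nc \<alpha> n m (Q x) u) q' * Vc n m q')"
      unfolding C_def xe fst_conv snd_conv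
      by (intro Bochner_Integration.integral_add int_cc Bochner_Integration.integrable_sum integrable_mult_left int_pmf)
    also have "measure_pmf.expectation \<mu> (\<lambda>u. \<Sum>q'\<in>{0..Nc n m}. pmf (comp_trans_pmf N M Mc Nc \<alpha> n m (Q x) u) q' * Vc n m q')
       = (\<Sum>q'\<in>{0..Nc n m}. measure_pmf.expectation \<mu> (\<lambda>u. pmf (comp_trans_pmf N M Mc Nc \<alpha> n m (Q x) u) q') * Vc n m q')"
      by (subst Bochner_Integration.integral_sum) (auto intro: int_pmf)
    finally show ?thesis using b xe by simp
  qed
  have "(\<Sum>(n, m)\<in>SIdx N Mc. \<theta>c n m) + (\<Sum>(n, m)\<in>SIdx N Mc. Vc n m (Q (n, m)))
      = (\<Sum>x\<in>SIdx N Mc. measure_pmf.expectation \<mu> (C x))"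
    by (simp add: EC sum.distrib case_prod_beta)
  also have "\<dots> = measure_pmf.expectation \<mu> (\<lambda>u. \<Sum>x\<in>SIdx N Mc. C x u)"
    by (rule Bochner_Integration.integral_sum[OF intC, symmetric])
  finally have L: "(\<Sum>(n, m)\<in>SIdx N Mc. \<theta>c n m) + (\<Sum>(n, m)\<in>SIdx N Mc. Vc n m (Q (n, m)))
      = measure_pmf.expectation \<mu> (\<lambda>u. \<Sum>x\<in>SIdx N Mc. C x u)" .
  have CG: "(\<Sum>x\<in>SIdx N Mc. C x u) = cost N Mc w p Q u + G u" if u: "u \<in> set_pmf \<mu>" for u
  proof -
    have ua: "u \<in> actions N Mc" using u assms(8) by blast
    have "(\<Sum>x\<in>SIdx N Mc. C x u) = (\<Sum>(n, m)\<in>SIdx N Mc. comp_cost w p n m (Q (n, m)) u)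
       + (\<Sum>(n, m)\<in>SIdx N Mc. \<Sum>q'\<in>{0..Nc n m}. pmf (comp_trans_pmf N M Mc Nc \<alpha> n m (Q (n, m)) u) q' * Vc n m q')"
      by (simp add: C_def sum.distrib case_prod_beta)
    also have "\<dots> = cost N Mc w p Q u + G u"
      unfolding G_def F_def
      by (simp add: cost_sep[where M=M and N=N and Mc=Mc and p=p, OF assms(2,3,6) ua] trans_sep[OF fin])
    finally show ?thesis .
  qed
  have intcost: "integrable (measure_pmf \<mu>) (\<lambda>u. cost N Mc w p Q u)"
  proof (rule integrable_cong_AE_imp[where g="\<lambda>u. (\<Sum>x\<in>SIdx N Mc. C x u) - G u"])
    show "integrable (measure_pmf \<mu>) (\<lambda>u. (\<Sum>x\<in>SIdx N Mc. C x u) - G u)"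
      using intC intG by auto
    show "AE u in measure_pmf \<mu>. (\<Sum>x\<in>SIdx N Mc. C x u) - G u = cost N Mc w p Q u"
      by (auto simp: AE_measure_pmf_iff CG)
  qed simp
  have "measure_pmf.expectation \<mu> (\<lambda>u. \<Sum>x\<in>SIdx N Mc. C x u)
      = measure_pmf.expectation \<mu> (\<lambda>u. cost N Mc w p Q u + G u)"
    by (rule cong_pmf) (rule CG)
  also have "\<dots> = measure_pmf.expectation \<mu> (\<lambda>u. cost N Mc w p Q u) + measure_pmf.expectation \<mu> G"
    by (rule Bochner_Integration.integral_add[OF intcost intG])
  also have "measure_pmf.expectation \<mu> G = (\<Sum>Q'\<in>states N Mc Nc.
                  measure_pmf.expectation \<mu> (\<lambda>u. pmf (trans_pmf N M Mc Nc \<alpha> Q u) Q') * F Q')"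
    unfolding G_def by (subst Bochner_Integration.integral_sum) (auto intro: int_pmf)
  finally show "(\<Sum>(n, m)\<in>SIdx N Mc. \<theta>c n m) + (\<Sum>(n, m)\<in>SIdx N Mc. Vc n m (Q (n, m))) =
             measure_pmf.expectation \<mu> (\<lambda>u. cost N Mc w p Q u)
             + (\<Sum>Q'\<in>states N Mc Nc.
                  measure_pmf.expectation \<mu> (\<lambda>u. pmf (trans_pmf N M Mc Nc \<alpha> Q u) Q')
                  * (\<Sum>(n, m)\<in>SIdx N Mc. Vc n m (Q' (n, m))))"
    using L F_def by simp
qed

end
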